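(* In the setting described in the context, let $\rho\in\widehat\Lambda$, $\chi\in\widehat\Gamma$, assume that $q_{ii}$ is not a root of unity for all $1\le i\le n$ and that $q_{ij}q_{ji}=1$ for all $1\le i,j\le n$ with $i\ne j$. Then for all integers $t_1,\dots,t_n\ge0$, $$(u_1^{t_1}\cdots u_n^{t_n})\cdot_\rho\widetilde\chi=\prod_{i=1}^n\prod_{l_i=0}^{t_i-1}\big(1-q_{ii}^{l_i}\rho(z_i)\chi(g_i)\big)\,\Phi(u_1^{t_1}\cdots u_n^{t_n})\widetilde\chi .$$
   Context: $k$ is an algebraically closed field of characteristic zero; for an abelian group $G$, $\widehat G$ is its group of characters $G\to k^\times$. A Yetter–Drinfeld module over $k[G]$ is a $G$-graded vector space $X=\bigoplus_g X_g$ with a $G$-action preserving each $X_g$; $X_g^{\psi}=\{x\in X_g: h\cdot x=\psi(h)x\ \forall h\}$; braiding $c(x\otimes y)=(g\cdot y)\otimes x$ for $x\in X_g$. The Nichols algebra $\mathfrak B(X)$ is the unique connected $\mathbb N$-graded braided Hopf algebra in this category generated by its degree-one part $\cong X$, which equals its space of primitive elements. The smash product $\mathfrak B(X)\#k[G]$ is the Hopf algebra containing $\mathfrak B(X)$ and $k[G]$ as subalgebras, with $gxg^{-1}=\psi(g)x$, $\Delta(x)=g'\otimes x+x\otimes1$ for $x\in X_{g'}^{\psi}$, and $\Delta(g)=g\otimes g$. Setting: $\Lambda,\Gamma$ abelian groups, $n\ge1$, $z_1,\dots,z_n\in\Lambda$, $g_1,\dots,g_n\in\Gamma$, nontrivial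 characters $\eta_1,\dots,\eta_n\in\widehat\Lambda$, $\chi_1,\dots,\chi_n\in\widehat\Gamma$. $W$ is the Yetter–Drinfeld module over $k[\Lambda]$ with basis $u_i\in W_{z_i}^{\eta_i}$, $V$ the one over $k[\Gamma]$ with basis $a_i\in V_{g_i}^{\chi_i}$; $U=\mathfrak B(W)\#k[\Lambda]$, $A=\mathfrak B(V)\#k[\Gamma]$; $q_{ij}=\eta_j(z_i)$. For $\psi\in\widehat\Gamma$ (resp. $\widehat\Lambda$), $\widetilde\psi$ is the algebra map $A\to k$ (resp. $U\to k$) with $\widetilde\psi(g)=\psi(g)$ and vanishing on the $a_j$ (resp. $u_j$). Let $\varphi:\Lambda\to\widehat\Gamma$ be a group homomorphism with $\varphi(z_i)=\chi_i^{-1}$ and $\eta_i(z)=\varphi(z)(g_i)$ for all $i$ and $z\in\Lambda$, and let $l_1,\dots,l_n\in k$ be nonzero. Then there is a Hopf algebra map $\Phi:U\to A^{o\,\mathrm{cop}}$ with $\Phi(z)=\widetilde{\varphi(z)}$, $\Phi(u_i)(g)=0$, $\Phi(u_i)(a_j)=\delta_{ij}l_i$. The dual $A^*$ is an algebra under convolution $(pq)(a)=p(a_{(1)})q(a_{(2)})$. For $\rho\in\widehat\Lambda$, $U$ acts on $A^*$ by $u\cdot_\rho p=\Phi(u_{(1)})\,\widetilde\rho(u_{(2)})\,p\,\Phi(S(u_{(3)}))$ (products in $A^*$). *)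

theory Defs
  imports "HOL-Computational_Algebra.Polynomial"
begin

text \<open>Abelian groups are written additively (type class ab_group_add).
  A basis element of the smash product T(X)#k[G] is a pair (w, g) standing for
  x_{w_1} ... x_{w_m} g  (letters indexed 0..<n).  The full linear dual is the
  type of all functions (nat list * 'g) => 'k.\<close>

definition is_char :: "('g::ab_group_add \<Rightarrow> 'k::field) \<Rightarrow> bool" where
  "is_char \<psi> \<longleftrightarrow> (\<forall>a b. \<psi> (a + b) = \<psi> a * \<psi> b) \<and> (\<forall>a. \<psi> a \<noteq> 0)"

definition alg_closed_field :: "'k::field itself \<Rightarrow> bool" where
  "alg_closed_field _ \<longleftrightarrow> (\<forall>p :: 'k poly. degree p > 0 \<longrightarrow> (\<exists>x. poly p x = 0))"

text \<open>Coproduct of a basis element x_{w} h of T(X)#k[G], where x_i has degree gr i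
  and weight ch i:  Delta(x_i) = gr i \<otimes> x_i + x_i \<otimes> 1,  Delta(h) = h \<otimes> h,
  and h x_i = ch i h x_i h.\<close>
fun bcop :: "(nat \<Rightarrow> 'g::ab_group_add) \<Rightarrow> (nat \<Rightarrow> 'g \<Rightarrow> 'k::comm_ring_1) \<Rightarrow> nat list \<Rightarrow> 'g
    \<Rightarrow> ('k \<times> (nat list \<times> 'g) \<times> (nat list \<times> 'g)) list" where
  "bcop gr ch [] h = [(1, ([], h), ([], h))]"
| "bcop gr ch (i # w) h =
     concat (map (\<lambda>(c, (w1, h1), (w2, h2)).
        [(c, (i # w1, h1), (w2, h2)),
         (c * prod_list (map (\<lambda>j. ch j (gr i)) w1), (w1, gr i + h1), (i # w2, h2))])
      (bcop gr ch w h))"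

definition conv :: "(nat \<Rightarrow> 'g::ab_group_add) \<Rightarrow> (nat \<Rightarrow> 'g \<Rightarrow> 'k::comm_ring_1)
    \<Rightarrow> (nat list \<times> 'g \<Rightarrow> 'k) \<Rightarrow> (nat list \<times> 'g \<Rightarrow> 'k) \<Rightarrow> (nat list \<times> 'g \<Rightarrow> 'k)" where
  "conv gr ch p q x = sum_list (map (\<lambda>(c, x1, x2). c * p x1 * q x2) (bcop gr ch (fst x) (snd x)))"

definition tld :: "('g \<Rightarrow> 'k::zero) \<Rightarrow> nat list \<times> 'g \<Rightarrow> 'k" where
  "tld \<psi> x = (if fst x = [] then \<psi> (snd x) else 0)"

text \<open>Phi(u_i) as an element of A^*: Phi(u_i)(a_j g) = delta_ij l_i phi(z_i)(g), zero on all
  other basis monomials (forced by Delta(Phi(u_i)) in A^{o cop}).\<close>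
definition Phi_u :: "(nat \<Rightarrow> 'k::comm_ring_1) \<Rightarrow> ('l \<Rightarrow> 'g \<Rightarrow> 'k) \<Rightarrow> (nat \<Rightarrow> 'l) \<Rightarrow> nat
    \<Rightarrow> nat list \<times> 'g \<Rightarrow> 'k" where
  "Phi_u l \<phi> z i x = (if fst x = [i] then l i * \<phi> (z i) (snd x) else 0)"

text \<open>Phi on a basis element u_{w_1}...u_{w_m} lambda (Phi is an algebra map).\<close>
definition PhiU :: "(nat \<Rightarrow> 'g::ab_group_add) \<Rightarrow> (nat \<Rightarrow> 'g \<Rightarrow> 'k::comm_ring_1) \<Rightarrow> (nat \<Rightarrow> 'k)
    \<Rightarrow> ('l \<Rightarrow> 'g \<Rightarrow> 'k) \<Rightarrow> (nat \<Rightarrow> 'l) \<Rightarrow> nat list \<times> 'l \<Rightarrow> (nat list \<times> 'g \<Rightarrow> 'k)" where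
  "PhiU gs chis l \<phi> z x = foldr (conv gs chis) (map (Phi_u l \<phi> z) (fst x)) (tld (\<phi> (snd x)))"

text \<open>Antipode of T(W)#k[Lambda] on a basis element: a scalar times a basis element.
  S(lambda) = -lambda, S(u_i) = -(-z_i) u_i, S anti-multiplicative.\<close>
fun antip :: "(nat \<Rightarrow> 'l::ab_group_add) \<Rightarrow> (nat \<Rightarrow> 'l \<Rightarrow> 'k::comm_ring_1) \<Rightarrow> nat list \<Rightarrow> 'l
    \<Rightarrow> 'k \<times> (nat list \<times> 'l)" where
  "antip z eta [] lam = (1, ([], - lam))"
| "antip z eta (i # w) lam =
     (case antip z eta w lam of (c, (v, \<mu>)) \<Rightarrow> (- c * eta i (\<mu> - z i), (v @ [i], \<mu> - z i)))"

text \<open>The action  u .rho p = Phi(u_(1)) rho~(u_(2)) p Phi(S(u_(3)))  for a basis element u of U.\<close>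
definition act :: "(nat \<Rightarrow> 'l::ab_group_add) \<Rightarrow> (nat \<Rightarrow> 'l \<Rightarrow> 'k::comm_ring_1)
    \<Rightarrow> (nat \<Rightarrow> 'g::ab_group_add) \<Rightarrow> (nat \<Rightarrow> 'g \<Rightarrow> 'k) \<Rightarrow> (nat \<Rightarrow> 'k) \<Rightarrow> ('l \<Rightarrow> 'g \<Rightarrow> 'k)
    \<Rightarrow> ('l \<Rightarrow> 'k) \<Rightarrow> nat list \<times> 'l \<Rightarrow> (nat list \<times> 'g \<Rightarrow> 'k) \<Rightarrow> (nat list \<times> 'g \<Rightarrow> 'k)" where
  "act z eta gs chis l \<phi> \<rho> u p = (\<lambda>x.
     sum_list (map (\<lambda>(c, x1, y).
       sum_list (map (\<lambda>(c', x2, x3).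
         (case antip z eta (fst x3) (snd x3) of (d, s) \<Rightarrow>
           c * c' * tld \<rho> x2 * d *
           conv gs chis (conv gs chis (PhiU gs chis l \<phi> z x1) p) (PhiU gs chis l \<phi> z s) x))
         (bcop z eta (fst y) (snd y))))
     (bcop z eta (fst u) (snd u))))"

definition mono :: "nat \<Rightarrow> (nat \<Rightarrow> nat) \<Rightarrow> nat list" where
  "mono n t = concat (map (\<lambda>i. replicate (t i) i) [0..<n])"

end

theory Submission
  imports Defs
begin

definition Lk :: "nat \<Rightarrow> (nat list \<times> 'g \<Rightarrow> 'k) \<Rightarrow> (nat list \<times> 'g \<Rightarrow> 'k)" where
  "Lk k p = (\<lambda>x. p (k # fst x, snd x))"

definition Gsh :: "(nat \<Rightarrow> 'g::ab_group_add \<Rightarrow> 'k::comm_ring_1) \<Rightarrow> 'g \<Rightarrow> (nat list \<times> 'g \<Rightarrow> 'k) \<Rightarrow> (nat list \<times> 'g \<Rightarrow> 'k)" where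
  "Gsh ch g p = (\<lambda>x. prod_list (map (\<lambda>j. ch j g) (fst x)) * p (fst x, g + snd x))"

lemma sl_concat_map: "sum_list (map f (concat (map g xs))) = sum_list (map (\<lambda>x. sum_list (map f (g x))) xs)"
  by (induction xs) auto

lemma conv_Nil: "conv gr ch p q ([], h) = p ([],h) * q ([],h)"
  by (simp add: conv_def)

lemma conv_Cons: "conv gr ch p q (k#w, h) = conv gr ch (Lk k p) q (w,h) + conv gr ch (Gsh ch (gr k) p) (Lk k q) (w,h)"
  unfolding conv_def Lk_def Gsh_def
  by (simp add: sum_list_addf[symmetric] split_def o_def mult.assoc sl_concat_map)

lemma conv_zero_left: "conv gr ch (\<lambda>_. 0) q x = 0"
  by (simp add: conv_def split_def)
lemma conv_zero_right: "conv gr ch p (\<lambda>_. 0) x = 0"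
  by (simp add: conv_def split_def)
lemma conv_add_left: "conv gr ch (\<lambda>y. p y + p' y) q x = conv gr ch p q x + conv gr ch p' q x"
  by (simp add: conv_def split_def sum_list_addf[symmetric] algebra_simps)
lemma conv_add_right: "conv gr ch p (\<lambda>y. q y + q' y) x = conv gr ch p q x + conv gr ch p q' x"
  by (simp add: conv_def split_def sum_list_addf[symmetric] algebra_simps)
lemma conv_smult_left: "conv gr ch (\<lambda>y. c * p y) q x = c * conv gr ch p q x"
  by (simp add: conv_def split_def sum_list_const_mult[symmetric] algebra_simps)
lemma conv_smult_right: "conv gr ch p (\<lambda>y. c * q y) x = c * conv gr ch p q x"
  by (simp add: conv_def split_def sum_list_const_mult[symmetric] algebra_simps)
lemma conv_suml_left: "conv gr ch (\<lambda>y. sum_list (map (\<lambda>a. F a y) xs)) q x = sum_list (map (\<lambda>a. conv gr ch (F a) q x) xs)"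
proof (induction xs)
  case Nil then show ?case using conv_zero_left[of gr ch q x] by simp
next
  case (Cons a xs) then show ?case using conv_add_left[of gr ch "F a" "\<lambda>y. sum_list (map (\<lambda>a. F a y) xs)" q x] by simp
qed
lemma conv_suml_right: "conv gr ch p (\<lambda>y. sum_list (map (\<lambda>a. F a y) xs)) x = sum_list (map (\<lambda>a. conv gr ch p (F a) x) xs)"
proof (induction xs)
  case Nil then show ?case using conv_zero_right[of gr ch p x] by simp
next
  case (Cons a xs) then show ?case using conv_add_right[of gr ch p "F a" "\<lambda>y. sum_list (map (\<lambda>a. F a y) xs)" x] by simp
qed

lemma Lk_conv: "Lk k (conv gr ch p q) = (\<lambda>y. conv gr ch (Lk k p) q y + conv gr ch (Gsh ch (gr k) p) (Lk k q) y)"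
  by (rule ext) (simp add: Lk_def conv_Cons[of gr ch p q k "fst _" "snd _", simplified])

lemma Lk_Gsh: "Lk k (Gsh ch g p) = (\<lambda>y. ch k g * Gsh ch g (Lk k p) y)"
  by (rule ext) (simp add: Lk_def Gsh_def)

lemma Gsh_Gsh: "Gsh ch g (Gsh ch g' p) = Gsh ch g' (Gsh ch g p)"
  by (rule ext) (simp add: Gsh_def algebra_simps)

lemma Gsh_conv_pt: "Gsh ch g (conv gr ch p q) (w, h) = conv gr ch (Gsh ch g p) (Gsh ch g q) (w, h)"
proof (induction w arbitrary: p q h)
  case Nil
  then show ?case by (simp add: Gsh_def conv_Nil)
next
  case (Cons k w)
  have "Gsh ch g (conv gr ch p q) (k # w, h) = ch k g * (Gsh ch g (conv gr ch (Lk k p) q) (w, h) + Gsh ch g (conv gr ch (Gsh ch (gr k) p) (Lk k q)) (w,h))"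
    by (simp add: Gsh_def conv_Cons algebra_simps)
  also have "\<dots> = ch k g * (conv gr ch (Gsh ch g (Lk k p)) (Gsh ch g q) (w,h) + conv gr ch (Gsh ch g (Gsh ch (gr k) p)) (Gsh ch g (Lk k q)) (w,h))"
    using Cons by simp
  also have "\<dots> = conv gr ch (Gsh ch g p) (Gsh ch g q) (k # w, h)"
    by (simp add: conv_Cons Lk_Gsh conv_smult_left conv_smult_right Gsh_Gsh algebra_simps)
  finally show ?case .
qed

lemma Gsh_conv: "Gsh ch g (conv gr ch p q) = conv gr ch (Gsh ch g p) (Gsh ch g q)"
  using Gsh_conv_pt by fastforce

lemma conv_assoc_pt: "conv gr ch (conv gr ch p q) r (w, h) = conv gr ch p (conv gr ch q r) (w, h)"
proof (induction w arbitrary: p q r h)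
  case Nil
  then show ?case by (simp add: conv_Nil)
next
  case (Cons k w)
  show ?case
    by (simp add: conv_Cons Lk_conv Gsh_conv conv_add_left conv_add_right Cons)
qed

lemma conv_assoc: "conv gr ch (conv gr ch p q) r = conv gr ch p (conv gr ch q r)"
  using conv_assoc_pt by fastforce

lemma conv_suml_left_fun: "conv gr ch (\<lambda>y. sum_list (map (\<lambda>a. F a y) xs)) q = (\<lambda>x. sum_list (map (\<lambda>a. conv gr ch (F a) q x) xs))"
  using conv_suml_left by fastforce
lemma conv_suml_right_fun: "conv gr ch p (\<lambda>y. sum_list (map (\<lambda>a. F a y) xs)) = (\<lambda>x. sum_list (map (\<lambda>a. conv gr ch p (F a) x) xs))"
  using conv_suml_right by fastforce
lemma conv_smult_left_fun: "conv gr ch (\<lambda>y. c * p y) q = (\<lambda>x. c * conv gr ch p q x)"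
  using conv_smult_left by fastforce
lemma conv_smult_right_fun: "conv gr ch p (\<lambda>y. c * q y) = (\<lambda>x. c * conv gr ch p q x)"
  using conv_smult_right by fastforce
lemma conv_zero_left_fun: "conv gr ch (\<lambda>_. 0) q = (\<lambda>_. 0)"
  using conv_zero_left by fastforce
lemma conv_zero_right_fun: "conv gr ch p (\<lambda>_. 0) = (\<lambda>_. 0)"
  using conv_zero_right by fastforce

lemma Lk_tld: "Lk k (tld \<psi>) = (\<lambda>_. 0)"
  by (rule ext) (simp add: Lk_def tld_def)

lemma Gsh_tld: "Gsh ch g (tld \<psi>) = tld (\<lambda>h. \<psi> (g + h))"
  by (rule ext) (simp add: Gsh_def tld_def)

lemma tld_mult: "conv gr ch (tld \<psi>) (tld \<psi>') = tld (\<lambda>h. \<psi> h * \<psi>' h)"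
proof (rule ext)
  fix x :: "nat list \<times> 'a"
  obtain w h where x: "x = (w, h)" by (cases x)
  show "conv gr ch (tld \<psi>) (tld \<psi>') x = tld (\<lambda>h. \<psi> h * \<psi>' h) x"
    unfolding x by (cases w) (simp_all add: conv_Nil conv_Cons Lk_tld conv_zero_left conv_zero_right tld_def)
qed

lemma conv_unit_left_pt: "(\<forall>h. \<psi> h = 1) \<Longrightarrow> conv gr ch (tld \<psi>) p (w, h) = p (w, h)"
proof (induction w arbitrary: \<psi> p h)
  case Nil then show ?case by (simp add: conv_Nil tld_def)
next
  case (Cons k w)
  have "conv gr ch (tld (\<lambda>h. \<psi> (gr k + h))) (Lk k p) (w, h) = Lk k p (w, h)"
    using Cons by simp
  then show ?case by (simp add: conv_Cons Lk_tld conv_zero_left Gsh_tld, simp add: Lk_def)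
qed

lemma conv_unit_right_pt: "(\<forall>h. \<psi> h = 1) \<Longrightarrow> conv gr ch p (tld \<psi>) (w, h) = p (w, h)"
proof (induction w arbitrary: p h)
  case Nil then show ?case by (simp add: conv_Nil tld_def)
next
  case (Cons k w)
  then show ?case by (simp add: conv_Cons Lk_tld conv_zero_right, simp add: Lk_def)
qed

lemma conv_unit_left: "(\<forall>h. \<psi> h = 1) \<Longrightarrow> conv gr ch (tld \<psi>) p = p"
  apply (rule ext) subgoal for x by (cases x) (simp add: conv_unit_left_pt) done
lemma conv_unit_right: "(\<forall>h. \<psi> h = 1) \<Longrightarrow> conv gr ch p (tld \<psi>) = p"
  apply (rule ext) subgoal for x by (cases x) (simp add: conv_unit_right_pt) done

lemma foldr_conv_assoc: "foldr (conv gr ch) xs (conv gr ch a b) = conv gr ch (foldr (conv gr ch) xs a) b"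
  by (induction xs) (simp_all add: conv_assoc)

lemma foldr_conv_smult: "foldr (conv gr ch) xs (\<lambda>y. c * a y) = (\<lambda>y. c * foldr (conv gr ch) xs a y)"
  by (induction xs) (simp_all add: conv_smult_right_fun)

lemma bcop_set: "(c, (w1, h1), (w2, h2)) \<in> set (bcop gr ch w h) \<Longrightarrow> set w1 \<subseteq> set w"
proof (induction w arbitrary: c w1 h1 w2 h2)
  case Nil then show ?case by simp
next
  case (Cons i w)
  from Cons.prems obtain a where a: "a \<in> set (bcop gr ch w h)"
    and m: "(c, (w1, h1), (w2, h2)) \<in> set ((\<lambda>(c, (w1, h1), w2, h2).
        [(c, (i # w1, h1), w2, h2), (c * prod_list (map (\<lambda>j. ch j (gr i)) w1), (w1, gr i + h1), i # w2, h2)]) a)"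
    by auto
  obtain c0 w1' h1' w2' h2' where ae: "a = (c0, (w1', h1'), (w2', h2'))" by (metis prod.collapse)
  have "set w1' \<subseteq> set w" using Cons.IH a ae by blast
  then show ?case using m ae by auto
qed

lemma bcop_tld: "sum_list (map (\<lambda>(c', x2, x3). c' * tld \<rho> x2 * H x3) (bcop gr ch w h)) = \<rho> (sum_list (map gr w) + h) * H (w, h)"
proof (induction w arbitrary: \<rho> H)
  case Nil then show ?case by (simp add: tld_def)
next
  case (Cons i w)
  have e: "(\<lambda>x. sum_list (map (\<lambda>(c', x2, x3). c' * tld \<rho> x2 * H x3) ((\<lambda>(c, (w1, h1), w2, h2).
        [(c, (i # w1, h1), w2, h2), (c * prod_list (map (\<lambda>j. ch j (gr i)) w1), (w1, gr i + h1), i # w2, h2)]) x)))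
     = (\<lambda>(c', x2, x3). c' * tld (\<lambda>x. \<rho> (gr i + x)) x2 * (\<lambda>x. H (i # fst x, snd x)) x3)"
    by (auto simp: fun_eq_iff tld_def)
  show ?case
    by (simp add: sl_concat_map e Cons add.assoc)
qed

lemma char_mult: "is_char \<psi> \<Longrightarrow> \<psi> (a + b) = \<psi> a * \<psi> b"
  by (simp add: is_char_def)
lemma char_nz: "is_char \<psi> \<Longrightarrow> \<psi> a \<noteq> 0"
  by (simp add: is_char_def)
lemma char_zero: "is_char (\<psi> :: 'g::ab_group_add \<Rightarrow> 'k::field) \<Longrightarrow> \<psi> 0 = 1"
proof -
  assume c: "is_char \<psi>"
  have "\<psi> 0 = \<psi> 0 * \<psi> 0" using char_mult[OF c, of 0 0] by simp
  then show ?thesis using char_nz[OF c, of 0] by (metis mult_cancel_left2)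
qed

fun Cf :: "(nat \<Rightarrow> 'l \<Rightarrow> 'k::comm_ring_1) \<Rightarrow> (nat \<Rightarrow> 'l) \<Rightarrow> ('l \<Rightarrow> 'k) \<Rightarrow> ('g \<Rightarrow> 'k) \<Rightarrow> (nat \<Rightarrow> 'g) \<Rightarrow> nat list \<Rightarrow> 'k" where
  "Cf eta z rho chi gs [] = 1"
| "Cf eta z rho chi gs (i # v) = (1 - eta i (z i) ^ count_list v i * rho (z i) * chi (gs i)) * Cf eta z rho chi gs v"

locale hs =
  fixes n :: nat and z :: "nat \<Rightarrow> 'l::ab_group_add" and gs :: "nat \<Rightarrow> 'g::ab_group_add"
    and eta :: "nat \<Rightarrow> 'l \<Rightarrow> 'k::field" and chis :: "nat \<Rightarrow> 'g \<Rightarrow> 'k"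
    and \<phi> :: "'l \<Rightarrow> 'g \<Rightarrow> 'k" and l :: "nat \<Rightarrow> 'k" and \<rho> :: "'l \<Rightarrow> 'k"
  assumes phi_char: "\<forall>a. is_char (\<phi> a)"
    and phi_add: "\<forall>a b c. \<phi> (a + b) c = \<phi> a c * \<phi> b c"
    and phi_z: "\<forall>i<n. \<forall>c. \<phi> (z i) c = inverse (chis i c)"
    and eta_phi: "\<forall>i<n. \<forall>a. eta i a = \<phi> a (gs i)"
    and chis_char: "\<forall>i<n. is_char (chis i)"
    and qq: "\<forall>i<n. \<forall>j<n. i \<noteq> j \<longrightarrow> eta j (z i) * eta i (z j) = 1"
    and rho_char: "is_char \<rho>"
begin

abbreviation "cv \<equiv> conv gs chis"
abbreviation "P \<equiv> Phi_u l \<phi> z"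
abbreviation "PU \<equiv> PhiU gs chis l \<phi> z"

lemma phi0: "\<phi> 0 c = 1"
proof -
  have "\<phi> 0 c = \<phi> 0 c * \<phi> 0 c" using phi_add[rule_format, of 0 0 c] by simp
  then show ?thesis using char_nz[of "\<phi> 0" c] phi_char by (metis mult_cancel_left2)
qed

lemma phi_fun_add: "\<phi> (a + b) = (\<lambda>c. \<phi> a c * \<phi> b c)"
  using phi_add by auto

lemma Lk_P: "Lk k (P j) = (if k = j then (\<lambda>y. l j * tld (\<phi> (z j)) y) else (\<lambda>_. 0))"
  by (auto simp: fun_eq_iff Lk_def Phi_u_def tld_def)

lemma Lk_P_same: "Lk j (P j) = (\<lambda>y. l j * tld (\<phi> (z j)) y)"
  by (simp add: Lk_P)
lemma Lk_P_diff: "k \<noteq> j \<Longrightarrow> Lk k (P j) = (\<lambda>_. 0)"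
  by (simp add: Lk_P)

lemma Gsh_P: "j < n \<Longrightarrow> Gsh chis g (P j) = P j"
proof (rule ext)
  fix x :: "nat list \<times> 'g"
  assume j: "j < n"
  have c: "is_char (chis j)" using chis_char j by auto
  have "\<phi> (z j) (g + snd x) = inverse (chis j g) * \<phi> (z j) (snd x)"
    using char_mult[of "\<phi> (z j)" g "snd x"] phi_char phi_z j by auto
  then show "Gsh chis g (P j) x = P j x"
    using char_nz[OF c, of g] by (auto simp: Gsh_def Phi_u_def)
qed

lemma tld_comm_pt: "is_char \<psi> \<Longrightarrow> cv (tld \<psi>) (P i) (w, h) = \<psi> (gs i) * cv (P i) (tld \<psi>) (w, h)"
proof (cases w)
  case Nil then show ?thesis by (simp add: conv_Nil Phi_u_def)
next
  case (Cons k w')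
  assume c: "is_char \<psi>"
  show ?thesis
    using c by (simp add: Cons conv_Cons Lk_tld Lk_P Gsh_tld conv_zero_left conv_zero_right
        conv_smult_right conv_smult_left tld_mult char_mult algebra_simps, simp add: tld_def)
qed

lemma tld_comm: "is_char \<psi> \<Longrightarrow> cv (tld \<psi>) (P i) = (\<lambda>x. \<psi> (gs i) * cv (P i) (tld \<psi>) x)"
  apply (rule ext) subgoal for x by (cases x) (simp add: tld_comm_pt) done

lemma P_qcomm_pt: "i < n \<Longrightarrow> j < n \<Longrightarrow> i \<noteq> j \<Longrightarrow> cv (P j) (P i) (w, h) = eta i (z j) * cv (P i) (P j) (w, h)"
proof (cases w)
  case Nil then show ?thesis by (simp add: conv_Nil Phi_u_def)
next
  case (Cons k w')
  assume ij: "i < n" "j < n" "i \<noteq> j"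
  have e1: "eta i (z j) = \<phi> (z j) (gs i)" "eta j (z i) = \<phi> (z i) (gs j)" using eta_phi ij by auto
  have q: "eta j (z i) * eta i (z j) = 1" using qq ij by auto
  have cj: "is_char (\<phi> (z j))" and ci: "is_char (\<phi> (z i))" using phi_char by auto
  have A: "cv (tld (\<phi> (z j))) (P i) (w', h) = eta i (z j) * cv (P i) (tld (\<phi> (z j))) (w', h)"
    unfolding e1(1) by (rule tld_comm_pt[OF cj])
  have A': "cv (tld (\<phi> (z i))) (P j) (w', h) = eta j (z i) * cv (P j) (tld (\<phi> (z i))) (w', h)"
    unfolding e1(2) by (rule tld_comm_pt[OF ci])
  have q': "eta i (z j) * (eta j (z i) * X) = X" for X
  proof -
    have "eta i (z j) * (eta j (z i) * X) = (eta j (z i) * eta i (z j)) * X" by (simp only: ac_simps)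
    then show ?thesis using q by simp
  qed
  show ?thesis
  proof (cases "k = j")
    case True
    then have ki: "k \<noteq> i" using ij by auto
    have "cv (P j) (P i) (w, h) = l j * (eta i (z j) * cv (P i) (tld (\<phi> (z j))) (w', h))"
      unfolding Cons True conv_Cons Gsh_P[OF ij(2)] Lk_P_same Lk_P_diff[OF ki[unfolded True]] conv_smult_left conv_zero_right A
      by simp
    moreover have "cv (P i) (P j) (w, h) = l j * cv (P i) (tld (\<phi> (z j))) (w', h)"
      unfolding Cons True conv_Cons Gsh_P[OF ij(1)] Lk_P_same Lk_P_diff[OF ki[unfolded True]] conv_smult_right conv_zero_left
      by simp
    ultimately show ?thesis by (simp only: ac_simps)
  next
    case False
    show ?thesis
    proof (cases "k = i")
      case True
      have "cv (P j) (P i) (w, h) = l i * cv (P j) (tld (\<phi> (z i))) (w', h)"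
        unfolding Cons True conv_Cons Gsh_P[OF ij(2)] Lk_P_same Lk_P_diff[OF False[unfolded True]] conv_smult_right conv_zero_left
        by simp
      moreover have "cv (P i) (P j) (w, h) = l i * (eta j (z i) * cv (P j) (tld (\<phi> (z i))) (w', h))"
        unfolding Cons True conv_Cons Gsh_P[OF ij(1)] Lk_P_same Lk_P_diff[OF False[unfolded True]] conv_smult_left conv_zero_right A'
        by simp
      moreover have "eta i (z j) * (l i * (eta j (z i) * X)) = l i * X" for X
      proof -
        have "eta i (z j) * (l i * (eta j (z i) * X)) = l i * (eta i (z j) * (eta j (z i) * X))" by (simp only: ac_simps)
        then show ?thesis by (simp only: q')
      qed
      ultimately show ?thesis by simp
    next
      case False2: False
      have "cv (P j) (P i) (w, h) = 0"
        unfolding Cons conv_Cons Gsh_P[OF ij(2)] Lk_P_diff[OF False] Lk_P_diff[OF False2] conv_zero_right conv_zero_left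
        by simp
      moreover have "cv (P i) (P j) (w, h) = 0"
        unfolding Cons conv_Cons Gsh_P[OF ij(1)] Lk_P_diff[OF False] Lk_P_diff[OF False2] conv_zero_right conv_zero_left
        by simp
      ultimately show ?thesis by simp
    qed
  qed
qed

lemma P_qcomm:
  assumes "i < n" "j < n" "i \<noteq> j"
  shows "cv (P j) (P i) = (\<lambda>x. eta i (z j) * cv (P i) (P j) x)"
  apply (rule ext) subgoal for x using P_qcomm_pt[OF assms, of "fst x" "snd x"] by simp done


lemma PU_eq: "PU (v, a) = foldr cv (map P v) (tld (\<phi> a))"
  by (simp add: PhiU_def)

lemma tld_foldr: "is_char \<psi> \<Longrightarrow> cv (tld \<psi>) (foldr cv (map P v) a) = (\<lambda>x. prod_list (map (\<lambda>j. \<psi> (gs j)) v) * foldr cv (map P v) (cv (tld \<psi>) a) x)"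
proof (induction v)
  case Nil then show ?case by simp
next
  case (Cons j v)
  have "cv (tld \<psi>) (foldr cv (map P (j # v)) a) = cv (cv (tld \<psi>) (P j)) (foldr cv (map P v) a)"
    by (simp add: conv_assoc)
  also have "\<dots> = (\<lambda>x. \<psi> (gs j) * cv (P j) (cv (tld \<psi>) (foldr cv (map P v) a)) x)"
    using Cons.prems by (simp add: tld_comm conv_smult_left_fun conv_assoc)
  also have "\<dots> = (\<lambda>x. prod_list (map (\<lambda>j. \<psi> (gs j)) (j # v)) * foldr cv (map P (j # v)) (cv (tld \<psi>) a) x)"
    using Cons by (simp add: conv_smult_right_fun mult.assoc)
  finally show ?case .
qed

lemma PU_tld_left: "cv (tld (\<phi> a)) (PU (v, b)) = (\<lambda>x. prod_list (map (\<lambda>j. \<phi> a (gs j)) v) * PU (v, a + b) x)"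
  using phi_char by (simp add: PU_eq tld_foldr tld_mult phi_fun_add)

lemma PU_right: "cv (cv (PU (v, m)) (tld (\<phi> b))) (P i) = (\<lambda>x. \<phi> (m + b) (gs i) * PU (v @ [i], m + b) x)"
proof -
  have "cv (cv (PU (v, m)) (tld (\<phi> b))) (P i) = foldr cv (map P v) (cv (tld (\<phi> (m + b))) (P i))"
    by (simp add: PU_eq foldr_conv_assoc[symmetric] conv_assoc tld_mult phi_fun_add)
  also have "\<dots> = (\<lambda>x. \<phi> (m + b) (gs i) * PU (v @ [i], m + b) x)"
    using phi_char by (simp add: tld_comm foldr_conv_smult PU_eq)
  finally show ?thesis .
qed

lemma PU_qcomm: "set v \<subseteq> {..<n} \<Longrightarrow> i < n \<Longrightarrow>
  (\<lambda>x. prod_list (map (\<lambda>j. eta j (z i)) v) * cv (PU (v, 0)) (P i) x) = (\<lambda>x. eta i (z i) ^ count_list v i * cv (P i) (PU (v, 0)) x)"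
proof (induction v)
  case Nil
  then show ?case using tld_comm[of "\<phi> 0" i] phi_char by (simp add: PU_eq phi0)
next
  case (Cons j v)
  have j: "j < n" and i: "i < n" using Cons.prems by auto
  have IH: "(\<lambda>x. prod_list (map (\<lambda>j. eta j (z i)) v) * cv (PU (v, 0)) (P i) x) = (\<lambda>x. eta i (z i) ^ count_list v i * cv (P i) (PU (v, 0)) x)"
    using Cons by auto
  have "(\<lambda>x. prod_list (map (\<lambda>j. eta j (z i)) (j # v)) * cv (PU (j # v, 0)) (P i) x)
     = (\<lambda>x. eta j (z i) * cv (P j) (\<lambda>x. prod_list (map (\<lambda>j. eta j (z i)) v) * cv (PU (v, 0)) (P i) x) x)"
    by (simp add: PU_eq conv_assoc conv_smult_right mult.assoc)
  also have "\<dots> = (\<lambda>x. eta j (z i) * eta i (z i) ^ count_list v i * cv (cv (P j) (P i)) (PU (v, 0)) x)"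
    unfolding IH by (simp add: conv_smult_right conv_assoc mult.assoc)
  also have "\<dots> = (\<lambda>x. eta i (z i) ^ count_list (j # v) i * cv (P i) (PU (j # v, 0)) x)"
  proof (cases "j = i")
    case True then show ?thesis by (simp add: PU_eq conv_assoc)
  next
    case False
    have q: "eta j (z i) * eta i (z j) = 1" using qq Cons.prems False by auto
    have ji: "j \<noteq> i" using False by simp
    have e: "cv (cv (P j) (P i)) (PU (v, 0)) = (\<lambda>x. eta i (z j) * cv (P i) (PU (j # v, 0)) x)"
      unfolding P_qcomm[OF i j False[symmetric]] conv_smult_left_fun by (simp add: PU_eq conv_assoc)
    have q': "eta j (z i) * Y * (eta i (z j) * X) = Y * X" for X Y
    proof -
      have "eta j (z i) * Y * (eta i (z j) * X) = (eta j (z i) * eta i (z j)) * (Y * X)" by (simp only: ac_simps)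
      then show ?thesis by (simp only: q mult_1)
    qed
    show ?thesis unfolding e q' using ji by simp
  qed
  finally show ?case .
qed

abbreviation "ACT \<equiv> act z eta gs chis l \<phi> \<rho>"

lemma act_simp: "ACT (v, m) p = (\<lambda>x. sum_list (map (\<lambda>(c, x1, y). c * \<rho> (sum_list (map z (fst y)) + snd y)
   * fst (antip z eta (fst y) (snd y)) * cv (cv (PU x1) p) (PU (snd (antip z eta (fst y) (snd y)))) x) (bcop z eta v m)))"
proof (rule ext)
  fix x
  have inner: "sum_list (map (\<lambda>(c', x2, x3). case antip z eta (fst x3) (snd x3) of (d, s) \<Rightarrow>
           c * c' * tld \<rho> x2 * d * cv (cv (PU x1) p) (PU s) x) (bcop z eta (fst y) (snd y)))
     = c * \<rho> (sum_list (map z (fst y)) + snd y)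
   * fst (antip z eta (fst y) (snd y)) * cv (cv (PU x1) p) (PU (snd (antip z eta (fst y) (snd y)))) x" for c x1 y
  proof -
    have eq: "(\<lambda>(c', x2, x3). case antip z eta (fst x3) (snd x3) of (d, s) \<Rightarrow>
           c * c' * tld \<rho> x2 * d * cv (cv (PU x1) p) (PU s) x)
      = (\<lambda>(c', x2, x3). c' * tld \<rho> x2 * (\<lambda>x3. c * fst (antip z eta (fst x3) (snd x3)) * cv (cv (PU x1) p) (PU (snd (antip z eta (fst x3) (snd x3)))) x) x3)"
      by (auto simp: fun_eq_iff split: prod.split)
    show ?thesis unfolding eq bcop_tld by (simp add: algebra_simps)
  qed
  show "ACT (v, m) p x = sum_list (map (\<lambda>(c, x1, y). c * \<rho> (sum_list (map z (fst y)) + snd y)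
   * fst (antip z eta (fst y) (snd y)) * cv (cv (PU x1) p) (PU (snd (antip z eta (fst y) (snd y)))) x) (bcop z eta v m))"
    unfolding act_def fst_conv snd_conv
  proof (rule arg_cong[where f=sum_list], rule map_cong[OF refl])
    fix a :: "'k \<times> (nat list \<times> 'l) \<times> (nat list \<times> 'l)"
    obtain c x1 y where a: "a = (c, x1, y)" by (metis prod_cases3)
    show "(case a of (c, x1, y) \<Rightarrow> sum_list (map (\<lambda>(c', x2, x3). case antip z eta (fst x3) (snd x3) of (d, s) \<Rightarrow>
           c * c' * tld \<rho> x2 * d * cv (cv (PU x1) p) (PU s) x) (bcop z eta (fst y) (snd y)))) =
      (case a of (c, x1, y) \<Rightarrow> c * \<rho> (sum_list (map z (fst y)) + snd y)
   * fst (antip z eta (fst y) (snd y)) * cv (cv (PU x1) p) (PU (snd (antip z eta (fst y) (snd y)))) x)"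
      unfolding a prod.case by (rule inner)
  qed
qed

lemma pieceB:
  assumes v1: "set v1 \<subseteq> {..<n}" and i: "i < n"
  shows "c * prod_list (map (\<lambda>j. eta j (z i)) v1) * \<rho> (sum_list (map z (i # v2)) + h2) * fst (antip z eta (i # v2) h2)
      * cv (cv (PU (v1, z i + h1)) p) (PU (snd (antip z eta (i # v2) h2))) x
   = - (\<rho> (z i) * cv (cv (tld (\<phi> (z i))) (cv (\<lambda>x. c * \<rho> (sum_list (map z v2) + h2) * fst (antip z eta v2 h2)
      * cv (cv (PU (v1, h1)) p) (PU (snd (antip z eta v2 h2))) x) (tld (\<phi> (- z i))))) (P i) x)"
proof -
  obtain d v' m where an: "antip z eta v2 h2 = (d, (v', m))" by (metis prod_cases3)
  have an2: "antip z eta (i # v2) h2 = (- d * eta i (m - z i), (v' @ [i], m - z i))" using an by simp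
  have pe: "prod_list (map (\<lambda>j. eta j (z i)) v1) = prod_list (map (\<lambda>j. \<phi> (z i) (gs j)) v1)"
    using v1 eta_phi by (intro arg_cong[where f=prod_list] map_cong) auto
  have e2: "eta i (m - z i) = \<phi> (m + - z i) (gs i)" using eta_phi i by simp
  have "cv (cv (tld (\<phi> (z i))) (cv (cv (cv (PU (v1, h1)) p) (PU (v', m))) (tld (\<phi> (- z i))))) (P i)
      = cv (cv (cv (tld (\<phi> (z i))) (PU (v1, h1))) p) (cv (cv (PU (v', m)) (tld (\<phi> (- z i)))) (P i))"
    by (simp add: conv_assoc)
  also have "\<dots> = cv (cv (\<lambda>x. prod_list (map (\<lambda>j. \<phi> (z i) (gs j)) v1) * PU (v1, z i + h1) x) p)
       (\<lambda>x. \<phi> (m + - z i) (gs i) * PU (v' @ [i], m + - z i) x)"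
    by (simp only: PU_tld_left PU_right)
  also have "\<dots> = (\<lambda>x. prod_list (map (\<lambda>j. \<phi> (z i) (gs j)) v1) * \<phi> (m + - z i) (gs i) *
       cv (cv (PU (v1, z i + h1)) p) (PU (v' @ [i], m + - z i)) x)"
    by (simp add: conv_smult_left_fun conv_smult_right_fun mult.assoc)
  finally have FI: "cv (cv (tld (\<phi> (z i))) (cv (cv (cv (PU (v1, h1)) p) (PU (v', m))) (tld (\<phi> (- z i))))) (P i) x
     = prod_list (map (\<lambda>j. eta j (z i)) v1) * eta i (m - z i) * cv (cv (PU (v1, z i + h1)) p) (PU (v' @ [i], m - z i)) x"
    by (simp add: pe e2)
  have rr: "\<rho> (sum_list (map z (i # v2)) + h2) = \<rho> (z i) * \<rho> (sum_list (map z v2) + h2)"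
    using char_mult[OF rho_char, of "z i" "sum_list (map z v2) + h2"] by (simp add: add.assoc)
  show ?thesis
    unfolding rr an2 by (simp add: an conv_smult_left_fun conv_smult_right_fun FI algebra_simps)
qed

lemma act_Cons:
  assumes v: "set v \<subseteq> {..<n}" and i: "i < n"
  shows "ACT (i # v, 0) p = (\<lambda>x. cv (P i) (ACT (v, 0) p) x
     - \<rho> (z i) * cv (cv (tld (\<phi> (z i))) (cv (ACT (v, 0) p) (tld (\<phi> (- z i))))) (P i) x)"
proof -
  define F where "F = (\<lambda>a x. case a of (c, x1, y) \<Rightarrow> c * \<rho> (sum_list (map z (fst y)) + snd y)
   * fst (antip z eta (fst y) (snd y)) * cv (cv (PU x1) p) (PU (snd (antip z eta (fst y) (snd y)))) x)"
  have AS: "ACT (w, m) p = (\<lambda>x. sum_list (map (\<lambda>a. F a x) (bcop z eta w m)))" for w m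
    unfolding act_simp F_def by simp
  define A where "A = (\<lambda>a::'k \<times> (nat list \<times> 'l) \<times> (nat list \<times> 'l). case a of (c, (w1, h1), (w2, h2)) \<Rightarrow> (c, (i # w1, h1), (w2, h2)))"
  define B where "B = (\<lambda>a::'k \<times> (nat list \<times> 'l) \<times> (nat list \<times> 'l). case a of (c, (w1, h1), (w2, h2)) \<Rightarrow>
      (c * prod_list (map (\<lambda>j. eta j (z i)) w1), (w1, z i + h1), (i # w2, h2)))"
  have bc: "bcop z eta (i # v) 0 = concat (map (\<lambda>a. [A a, B a]) (bcop z eta v 0))"
    by (simp add: A_def B_def split_def)
  have piece: "F (A a) x + F (B a) x = cv (P i) (F a) x - \<rho> (z i) * cv (cv (tld (\<phi> (z i))) (cv (F a) (tld (\<phi> (- z i))))) (P i) x"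
    if a: "a \<in> set (bcop z eta v 0)" for a x
  proof -
    obtain c v1 h1 v2 h2 where ae: "a = (c, (v1, h1), (v2, h2))" by (metis prod_cases3 prod.collapse)
    have v1: "set v1 \<subseteq> {..<n}" using bcop_set[of c v1 h1 v2 h2 z eta v 0] a ae v by auto
    have FA: "F (A a) x = cv (P i) (F a) x"
      by (simp add: ae A_def F_def conv_smult_right_fun PU_eq conv_assoc)
    have FB: "F (B a) x = - (\<rho> (z i) * cv (cv (tld (\<phi> (z i))) (cv (F a) (tld (\<phi> (- z i))))) (P i) x)"
      unfolding ae B_def F_def using pieceB[OF v1 i, of c v2 h2 h1 p x] by simp
    show ?thesis using FA FB by simp
  qed
  show ?thesis
  proof (rule ext)
    fix x
    have "ACT (i # v, 0) p x = sum_list (map (\<lambda>a. F (A a) x + F (B a) x) (bcop z eta v 0))"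
      unfolding AS bc by (simp add: sl_concat_map)
    also have "\<dots> = sum_list (map (\<lambda>a. cv (P i) (F a) x - \<rho> (z i) * cv (cv (tld (\<phi> (z i))) (cv (F a) (tld (\<phi> (- z i))))) (P i) x) (bcop z eta v 0))"
      by (rule arg_cong[where f=sum_list], rule map_cong[OF refl], rule piece)
    also have "\<dots> = cv (P i) (ACT (v, 0) p) x
     - \<rho> (z i) * cv (cv (tld (\<phi> (z i))) (cv (ACT (v, 0) p) (tld (\<phi> (- z i))))) (P i) x"
      unfolding AS by (simp add: conv_suml_left_fun conv_suml_right_fun sum_list_subtractf sum_list_const_mult)
    finally show "ACT (i # v, 0) p x = cv (P i) (ACT (v, 0) p) x
     - \<rho> (z i) * cv (cv (tld (\<phi> (z i))) (cv (ACT (v, 0) p) (tld (\<phi> (- z i))))) (P i) x" .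
  qed
qed

lemma act_Nil: "ACT ([], 0) p = p"
proof -
  have u: "\<forall>h. \<phi> 0 h = 1" by (simp add: phi0)
  show ?thesis
    by (simp add: act_simp PU_eq conv_unit_left[OF u] conv_unit_right[OF u] char_zero[OF rho_char])
qed

lemma act_main:
  assumes chi: "is_char \<chi>"
  shows "set v \<subseteq> {..<n} \<Longrightarrow> ACT (v, 0) (tld \<chi>) = (\<lambda>x. Cf eta z \<rho> \<chi> gs v * cv (PU (v, 0)) (tld \<chi>) x)"
proof (induction v)
  case Nil
  have u: "\<forall>h. \<phi> 0 h = 1" by (simp add: phi0)
  show ?case by (simp add: act_Nil PU_eq conv_unit_left[OF u])
next
  case (Cons i v)
  have i: "i < n" and v: "set v \<subseteq> {..<n}" using Cons.prems by auto
  note IH = Cons.IH[OF v]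
  define Q where "Q = cv (PU (v, 0)) (tld \<chi>)"
  define C where "C = Cf eta z \<rho> \<chi> gs v"
  have pe: "prod_list (map (\<lambda>j. \<phi> (z i) (gs j)) v) = prod_list (map (\<lambda>j. eta j (z i)) v)"
    using v eta_phi by (intro arg_cong[where f=prod_list] map_cong) auto
  have PUz: "PU (v, z i) = cv (PU (v, 0)) (tld (\<phi> (z i)))"
  proof -
    have e: "cv (tld (\<phi> 0)) (tld (\<phi> (z i))) = tld (\<phi> (z i))"
      using tld_mult[of gs chis "\<phi> 0" "\<phi> (z i)"] by (simp add: phi0)
    show ?thesis unfolding PU_eq foldr_conv_assoc[symmetric] e ..
  qed
  have tl: "cv (tld (\<phi> (z i))) (cv (tld \<chi>) (cv (tld (\<phi> (- z i))) (P i))) = cv (tld \<chi>) (P i)"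
  proof -
    have f: "(\<lambda>h. \<phi> (z i) h * (\<chi> h * \<phi> (- z i) h)) = \<chi>"
    proof
      fix h
      have "\<phi> (z i) h * \<phi> (- z i) h = 1" using phi_add[rule_format, of "z i" "- z i" h] by (simp add: phi0)
      then show "\<phi> (z i) h * (\<chi> h * \<phi> (- z i) h) = \<chi> h" by (metis mult.left_commute mult_1_right)
    qed
    show ?thesis by (simp add: conv_assoc[symmetric] tld_mult f)
  qed
  have X: "cv (cv (tld (\<phi> (z i))) (cv Q (tld (\<phi> (- z i))))) (P i)
      = (\<lambda>x. \<chi> (gs i) * eta i (z i) ^ count_list v i * cv (PU (i # v, 0)) (tld \<chi>) x)"
  proof -
    have "cv (cv (tld (\<phi> (z i))) (cv Q (tld (\<phi> (- z i))))) (P i)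
       = cv (cv (tld (\<phi> (z i))) (PU (v, 0))) (cv (tld \<chi>) (cv (tld (\<phi> (- z i))) (P i)))"
      by (simp add: Q_def conv_assoc)
    also have "\<dots> = (\<lambda>x. prod_list (map (\<lambda>j. eta j (z i)) v) * cv (PU (v, 0)) (cv (tld \<chi>) (P i)) x)"
      by (simp add: PU_tld_left pe PUz conv_smult_left_fun conv_assoc tl)
    also have "\<dots> = (\<lambda>x. \<chi> (gs i) * (prod_list (map (\<lambda>j. eta j (z i)) v) * cv (cv (PU (v, 0)) (P i)) (tld \<chi>) x))"
      using chi by (simp add: tld_comm conv_smult_right_fun conv_assoc[symmetric] conv_smult_left_fun algebra_simps)
    also have "\<dots> = (\<lambda>x. \<chi> (gs i) * (eta i (z i) ^ count_list v i * cv (cv (P i) (PU (v, 0))) (tld \<chi>) x))"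
    proof -
      have qc: "cv (\<lambda>x. prod_list (map (\<lambda>j. eta j (z i)) v) * cv (PU (v, 0)) (P i) x) (tld \<chi>)
          = cv (\<lambda>x. eta i (z i) ^ count_list v i * cv (P i) (PU (v, 0)) x) (tld \<chi>)"
        using PU_qcomm[OF v i] by simp
      then show ?thesis by (simp add: conv_smult_left_fun fun_eq_iff)
    qed
    finally show ?thesis by (simp add: PU_eq conv_assoc mult.assoc)
  qed
  have PQ: "cv (P i) (cv (PU (v, 0)) (tld \<chi>)) = cv (PU (i # v, 0)) (tld \<chi>)"
    by (simp add: PU_eq conv_assoc)
  have X': "cv (cv (tld (\<phi> (z i))) (cv (cv (PU (v, 0)) (tld \<chi>)) (tld (\<phi> (- z i))))) (P i)
      = (\<lambda>x. \<chi> (gs i) * eta i (z i) ^ count_list v i * cv (PU (i # v, 0)) (tld \<chi>) x)"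
    using X by (simp add: Q_def)
  show ?case
    unfolding act_Cons[OF v i] IH
    by (simp only: conv_smult_left_fun conv_smult_right_fun X' PQ) (simp add: algebra_simps)
qed

end

lemma Cf_append: "set xs \<inter> set ys = {} \<Longrightarrow> Cf eta z rho chi gs (xs @ ys) = Cf eta z rho chi gs xs * Cf eta z rho chi gs ys"
  by (induction xs) auto

lemma count_replicate_self: "count_list (replicate m i) i = m"
  by (induction m) auto

lemma Cf_replicate: "Cf eta z rho chi gs (replicate m i) = (\<Prod>li<m. 1 - eta i (z i) ^ li * rho (z i) * chi (gs i))"
  by (induction m) (auto simp: lessThan_Suc mult.commute count_replicate_self)

lemma mono_Suc: "mono (Suc n) t = mono n t @ replicate (t n) n"
  by (simp add: mono_def)

lemma set_mono: "set (mono n t) \<subseteq> {..<n}"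
  by (auto simp: mono_def)

lemma Cf_mono: "Cf eta z rho chi gs (mono n t) = (\<Prod>i<n. \<Prod>li<t i. 1 - eta i (z i) ^ li * rho (z i) * chi (gs i))"
proof (induction n)
  case 0 then show ?case by (simp add: mono_def)
next
  case (Suc n)
  have d: "set (mono n t) \<inter> set (replicate (t n) n) = {}" using set_mono[of n t] by auto
  show ?case by (simp add: mono_Suc Cf_append[OF d] Cf_replicate Suc lessThan_Suc mult.commute)
qed

theorem corollary2p5:
  fixes n :: nat
    and z :: "nat \<Rightarrow> 'l::ab_group_add" and gs :: "nat \<Rightarrow> 'g::ab_group_add"
    and eta :: "nat \<Rightarrow> 'l \<Rightarrow> 'k::field_char_0" and chis :: "nat \<Rightarrow> 'g \<Rightarrow> 'k"
    and \<phi> :: "'l \<Rightarrow> 'g \<Rightarrow> 'k" and l :: "nat \<Rightarrow> 'k"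
    and \<rho> :: "'l \<Rightarrow> 'k" and \<chi> :: "'g \<Rightarrow> 'k" and t :: "nat \<Rightarrow> nat"
  assumes "alg_closed_field TYPE('k)"
    and "n \<ge> 1"
    and "\<forall>i<n. is_char (eta i) \<and> (\<exists>a. eta i a \<noteq> 1)"
    and "\<forall>i<n. is_char (chis i) \<and> (\<exists>a. chis i a \<noteq> 1)"
    and "\<forall>a. is_char (\<phi> a)"
    and "\<forall>a b c. \<phi> (a + b) c = \<phi> a c * \<phi> b c"
    and "\<forall>i<n. \<forall>c. \<phi> (z i) c = inverse (chis i c)"
    and "\<forall>i<n. \<forall>a. eta i a = \<phi> a (gs i)"
    and "\<forall>i<n. l i \<noteq> 0"
    and "is_char \<rho>" and "is_char \<chi>"
    and "\<forall>i<n. \<forall>m::nat. m > 0 \<longrightarrow> (eta i (z i)) ^ m \<noteq> 1"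
    and "\<forall>i<n. \<forall>j<n. i \<noteq> j \<longrightarrow> eta j (z i) * eta i (z j) = 1"
  shows "\<forall>w g. set w \<subseteq> {..<n} \<longrightarrow>
     act z eta gs chis l \<phi> \<rho> (mono n t, 0) (tld \<chi>) (w, g) =
     (\<Prod>i<n. \<Prod>li<t i. 1 - (eta i (z i)) ^ li * \<rho> (z i) * \<chi> (gs i))
       * conv gs chis (PhiU gs chis l \<phi> z (mono n t, 0)) (tld \<chi>) (w, g)"
proof -
  interpret hs n z gs eta chis \<phi> l \<rho>
    using assms by unfold_locales auto
  have "act z eta gs chis l \<phi> \<rho> (mono n t, 0) (tld \<chi>)
     = (\<lambda>x. Cf eta z \<rho> \<chi> gs (mono n t) * conv gs chis (PhiU gs chis l \<phi> z (mono n t, 0)) (tld \<chi>) x)"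
    by (rule act_main[OF assms(11) set_mono])
  then show ?thesis by (simp add: Cf_mono)
qed

end
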